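(* Let $(\boldsymbol x^H,\eta^H,\boldsymbol y^H,u^H)$ be the solution returned by Algorithm 1 (described in the context) and $(\boldsymbol x^*,\eta^*,\boldsymbol y^*,u^* )$ an optimal solution of the multistage model. Let $h_{\max}=\max_{i\in[M]}h_{1i}$, $f_{t,\max}=\max_{i}f_{ti}$, $f_{t,\min}=\min_if_{ti}$, $c_{t,\min}=\min_{i\in[M],j\in[N]}c_{tij}$, and $M_{\min}=\lceil\sum_{j=1}^Nd_{1j}/h_{\max}\rceil$, where $\boldsymbol d_1=(d_{11},\ldots,d_{1N})$ is the demand at the root node. Assume the denominator below is positive. Then $$\frac{z^{MS}_{T,R}(\boldsymbol x^H,\eta^H,\boldsymbol y^H,u^H)}{z^{MS}_{T,R}(\boldsymbol x^*,\eta^*,\boldsymbol y^*,u^* )}\le1+\frac{M\sum_{t=1}^Tf_{t,\max}}{M_{\min}\sum_{t=1}^Tf_{t,\min}+\sum_{t=1}^Tc_{t,\min}\min_{n\in\mathcal T_t}\{\sum_{j=1}^Nd_{n,j}\}}.$$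
   Context: Setting. Integers $T\ge2$, $M,N\ge1$; costs $f_{ti}\ge0$ (vector $\boldsymbol f_t$), $c_{tij}\ge0$ (vector $\boldsymbol c_t\in\mathbb R^{MN}$), capacities $h_{ti}>0$; $(\boldsymbol A_t\boldsymbol y)_j=\sum_iy_{ij}$, $(\boldsymbol B_t\boldsymbol y)_i=\frac1{h_{ti}}\sum_jy_{ij}$. Ceilings and maxima of vectors are componentwise. Scenario tree: finite rooted tree, node set $\mathcal T$, root $1$, all root-to-leaf paths of $T$ nodes; $\mathcal T_t$ nodes at depth $t$, $t_n$ period of $n$, $\mathcal L=\mathcal T_T$, $a(n)$ parent, $\mathcal C(n)$ children, $\mathcal P(n)$ nodes on the root-to-$n$ path (inclusive); probabilities $p_n>0$, $\sum_{n\in\mathcal T_t}p_n=1$, $\sum_{m\in\mathcal C(n)}p_m=p_n$; demands $\boldsymbol d_n=(d_{n,1},\ldots,d_{n,N})\in\mathbb R^N_{\ge0}$. Risk parameters $\lambda_t\in[0,1]$, $\alpha_t\in(0,1)$ ($t\ge2$); $\tilde{\boldsymbol f}_n=\boldsymbol f_{t_n}$ if $n=1$ else $(1-\lambda_{t_n})\boldsymbol f_{t_n}$; $\tilde{\boldsymbol c}_n=\boldsymbol c_{t_n}$ if $n=1$ else $(1-\lambda_{t_n})\boldsymbol c_{t_n}$; $\tilde\lambda_n=0$ if $n\in\mathcal L$ else $\lambda_{t_n+1}$; $\tilde\alpha_n=0$ if $n=1$ else $\lambda_{t_n}/(1-\alpha_{t_n})$. Multistage model: minimize $z^{MS}_{T,R}(\boldsymbol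 x,\eta,\boldsymbol y,u):=\sum_{n\in\mathcal T}p_n\big(\tilde{\boldsymbol f}_n^{\mathsf T}\sum_{m\in\mathcal P(n)}\boldsymbol x_m+\tilde{\boldsymbol c}_n^{\mathsf T}\boldsymbol y_n+\tilde\lambda_n\eta_n+\tilde\alpha_nu_n\big)$ over $\boldsymbol x_n\in\mathbb Z^M_+$, $\boldsymbol y_n\in\mathbb R^{MN}_+$ ($n\in\mathcal T$), $\eta_n\in\mathbb R$ ($n\notin\mathcal L$), $u_n\ge0$ ($n\ne1$), subject to $\boldsymbol A_{t_n}\boldsymbol y_n=\boldsymbol d_n$, $\boldsymbol B_{t_n}\boldsymbol y_n\le\sum_{m\in\mathcal P(n)}\boldsymbol x_m$ ($n\in\mathcal T$), $u_n+\eta_{a(n)}\ge\boldsymbol f_{t_n}^{\mathsf T}\sum_{m\in\mathcal P(n)}\boldsymbol x_m+\boldsymbol c_{t_n}^{\mathsf T}\boldsymbol y_n$ ($n\ne1$). Algorithm 1. Step 1: solve the LP relaxation (drop integrality of $\boldsymbol x$) of the multistage model, obtaining an optimal $(\boldsymbol x^{MSLP},\eta^{MSLP},\boldsymbol y^{MSLP},u^{MSLP})$; if all $\boldsymbol x^{MSLP}_n$ are integral, stop and return it. Step 2: set $k=0$ and $(\boldsymbol x^0,\eta^0,\boldsymbol y^0,u^0)=(\boldsymbol x^{MSLP},\eta^{MSLP},\boldsymbol y^{MSLP},u^{MSLP})$. Repeat until successive iterates differ by less than a tolerance $\epsilon$: (a) set $\boldsymbol x^{k+1}_1=\lceil\boldsymbol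 B_{t_1}\boldsymbol y^k_1\rceil$, $\boldsymbol x^{k+1}_n=\max_{m\in\mathcal P(n)}\lceil\boldsymbol B_{t_m}\boldsymbol y^k_m\rceil-\max_{m\in\mathcal P(a(n))}\lceil\boldsymbol B_{t_m}\boldsymbol y^k_m\rceil$ ($n\ne1$), $\eta^{k+1}_n=\max_{m\in\mathcal C(n)}\{\boldsymbol f_{t_m}^{\mathsf T}\sum_{l\in\mathcal P(m)}\boldsymbol x^{k+1}_l+\boldsymbol c_{t_m}^{\mathsf T}\boldsymbol y^k_m-u^k_m\}$ ($n\notin\mathcal L$); (b) for each $n\ne1$ independently, let $(\boldsymbol y^{k+1}_n,u^{k+1}_n)$ be an optimal solution of $\min\tilde{\boldsymbol c}_n^{\mathsf T}\boldsymbol y_n+\tilde\alpha_nu_n$ s.t. $\boldsymbol B_{t_n}\boldsymbol y_n\le\sum_{m\in\mathcal P(n)}\boldsymbol x^{k+1}_m$, $\boldsymbol A_{t_n}\boldsymbol y_n=\boldsymbol d_n$, $u_n-\boldsymbol c_{t_n}^{\mathsf T}\boldsymbol y_n\ge\boldsymbol f_{t_n}^{\mathsf T}\sum_{m\in\mathcal P(n)}\boldsymbol x^{k+1}_m-\eta^{k+1}_{a(n)}$, $\boldsymbol y_n\ge0$, $u_n\ge0$; for $n=1$ solve the same problem without $u_1$ and the last constraint; (c) $k\leftarrow k+1$. Return the final iterate, denoted $(\boldsymbol x^H,\eta^H,\boldsymbol y^H,u^H)$. *)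

theory Defs
  imports Complex_Main
begin

text \<open>Conventions.  Periods t and node depths are 1-based (root has depth 1,
leaves have depth T).  Facility indices i range over {..<M} and customer
indices j over {..<N} (0-based).\<close>

record 'n msinst =
  nT    :: nat
  nM    :: nat
  nN    :: nat
  fc    :: "nat \<Rightarrow> nat \<Rightarrow> real"
  cc    :: "nat \<Rightarrow> nat \<Rightarrow> nat \<Rightarrow> real"
  hc    :: "nat \<Rightarrow> nat \<Rightarrow> real"
  lam   :: "nat \<Rightarrow> real"
  alp   :: "nat \<Rightarrow> real"
  nodes :: "'n set"
  root  :: 'n
  par   :: "'n \<Rightarrow> 'n"
  dep   :: "'n \<Rightarrow> nat"
  prob  :: "'n \<Rightarrow> real"
  dem   :: "'n \<Rightarrow> nat \<Rightarrow> real"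

definition children :: "'n msinst \<Rightarrow> 'n \<Rightarrow> 'n set" where
  "children I n = {m \<in> nodes I. m \<noteq> root I \<and> par I m = n}"

definition path :: "'n msinst \<Rightarrow> 'n \<Rightarrow> 'n set" where
  "path I n = {m. \<exists>k < dep I n. (par I ^^ k) n = m}"

definition stage :: "'n msinst \<Rightarrow> nat \<Rightarrow> 'n set" where
  "stage I t = {n \<in> nodes I. dep I n = t}"

definition is_leaf :: "'n msinst \<Rightarrow> 'n \<Rightarrow> bool" where
  "is_leaf I n \<longleftrightarrow> dep I n = nT I"

definition valid_inst :: "'n msinst \<Rightarrow> bool" where
  "valid_inst I \<longleftrightarrow>
     nT I \<ge> 2 \<and> nM I \<ge> 1 \<and> nN I \<ge> 1
   \<and> (\<forall>t\<in>{1..nT I}. \<forall>i<nM I. fc I t i \<ge> 0 \<and> hc I t i > 0)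
   \<and> (\<forall>t\<in>{1..nT I}. \<forall>i<nM I. \<forall>j<nN I. cc I t i j \<ge> 0)
   \<and> (\<forall>t\<in>{2..nT I}. 0 \<le> lam I t \<and> lam I t \<le> 1 \<and> 0 < alp I t \<and> alp I t < 1)
   \<and> finite (nodes I) \<and> root I \<in> nodes I \<and> dep I (root I) = 1
   \<and> (\<forall>n\<in>nodes I. n \<noteq> root I \<longrightarrow> par I n \<in> nodes I \<and> dep I n = dep I (par I n) + 1)
   \<and> (\<forall>n\<in>nodes I. dep I n \<le> nT I)
   \<and> (\<forall>n\<in>nodes I. dep I n < nT I \<longrightarrow> children I n \<noteq> {})
   \<and> (\<forall>n\<in>nodes I. prob I n > 0)
   \<and> (\<forall>t\<in>{1..nT I}. (\<Sum>n\<in>stage I t. prob I n) = 1)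
   \<and> (\<forall>n\<in>nodes I. dep I n < nT I \<longrightarrow> (\<Sum>m\<in>children I n. prob I m) = prob I n)
   \<and> (\<forall>n\<in>nodes I. \<forall>j<nN I. dem I n j \<ge> 0)"

text \<open>A (candidate) solution (x, eta, y, u): x n i, eta n, y n i j, u n.
  eta at leaves and u at the root do not exist in the model; their values are
  irrelevant (zero coefficients, no constraints).\<close>
type_synonym 'n sol =
  "('n \<Rightarrow> nat \<Rightarrow> real) \<times> ('n \<Rightarrow> real) \<times> ('n \<Rightarrow> nat \<Rightarrow> nat \<Rightarrow> real) \<times> ('n \<Rightarrow> real)"

definition cumx :: "'n msinst \<Rightarrow> ('n \<Rightarrow> nat \<Rightarrow> real) \<Rightarrow> 'n \<Rightarrow> nat \<Rightarrow> real" where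
  "cumx I x n i = (\<Sum>m\<in>path I n. x m i)"

definition ftil :: "'n msinst \<Rightarrow> 'n \<Rightarrow> nat \<Rightarrow> real" where
  "ftil I n i = (if n = root I then fc I (dep I n) i else (1 - lam I (dep I n)) * fc I (dep I n) i)"

definition ctil :: "'n msinst \<Rightarrow> 'n \<Rightarrow> nat \<Rightarrow> nat \<Rightarrow> real" where
  "ctil I n i j = (if n = root I then cc I (dep I n) i j else (1 - lam I (dep I n)) * cc I (dep I n) i j)"

definition ltil :: "'n msinst \<Rightarrow> 'n \<Rightarrow> real" where
  "ltil I n = (if is_leaf I n then 0 else lam I (dep I n + 1))"

definition atil :: "'n msinst \<Rightarrow> 'n \<Rightarrow> real" where
  "atil I n = (if n = root I then 0 else lam I (dep I n) / (1 - alp I (dep I n)))"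

definition fdot :: "'n msinst \<Rightarrow> 'n \<Rightarrow> (nat \<Rightarrow> real) \<Rightarrow> real" where
  "fdot I n X = (\<Sum>i<nM I. fc I (dep I n) i * X i)"

definition cdot :: "'n msinst \<Rightarrow> 'n \<Rightarrow> (nat \<Rightarrow> nat \<Rightarrow> real) \<Rightarrow> real" where
  "cdot I n yv = (\<Sum>i<nM I. \<Sum>j<nN I. cc I (dep I n) i j * yv i j)"

definition Bop :: "'n msinst \<Rightarrow> 'n \<Rightarrow> (nat \<Rightarrow> nat \<Rightarrow> real) \<Rightarrow> nat \<Rightarrow> real" where
  "Bop I n yv i = (1 / hc I (dep I n) i) * (\<Sum>j<nN I. yv i j)"

definition zMS :: "'n msinst \<Rightarrow> 'n sol \<Rightarrow> real" where
  "zMS I s = (case s of (x, eta, y, u) \<Rightarrow>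
     (\<Sum>n\<in>nodes I. prob I n *
        ((\<Sum>i<nM I. ftil I n i * cumx I x n i)
         + (\<Sum>i<nM I. \<Sum>j<nN I. ctil I n i j * y n i j)
         + ltil I n * eta n + atil I n * u n)))"

definition feasible_LP :: "'n msinst \<Rightarrow> 'n sol \<Rightarrow> bool" where
  "feasible_LP I s = (case s of (x, eta, y, u) \<Rightarrow>
     (\<forall>n\<in>nodes I.
        (\<forall>i<nM I. x n i \<ge> 0)
      \<and> (\<forall>i<nM I. \<forall>j<nN I. y n i j \<ge> 0)
      \<and> (\<forall>j<nN I. (\<Sum>i<nM I. y n i j) = dem I n j)
      \<and> (\<forall>i<nM I. Bop I n (y n) i \<le> cumx I x n i)
      \<and> (n \<noteq> root I \<longrightarrow> u n \<ge> 0 \<and>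
            u n + eta (par I n) \<ge> fdot I n (cumx I x n) + cdot I n (y n))))"

definition feasible_MS :: "'n msinst \<Rightarrow> 'n sol \<Rightarrow> bool" where
  "feasible_MS I s \<longleftrightarrow> feasible_LP I s \<and>
     (\<forall>n\<in>nodes I. \<forall>i<nM I. fst s n i \<in> \<int>)"

definition optimal_LP :: "'n msinst \<Rightarrow> 'n sol \<Rightarrow> bool" where
  "optimal_LP I s \<longleftrightarrow> feasible_LP I s \<and> (\<forall>s'. feasible_LP I s' \<longrightarrow> zMS I s \<le> zMS I s')"

definition optimal_MS :: "'n msinst \<Rightarrow> 'n sol \<Rightarrow> bool" where
  "optimal_MS I s \<longleftrightarrow> feasible_MS I s \<and> (\<forall>s'. feasible_MS I s' \<longrightarrow> zMS I s \<le> zMS I s')"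

text \<open>Node subproblem of step (b): capacity vector X (= cumulative x^{k+1}),
  eta value of the parent etap.  For the root, u and the last constraint are absent
  (and atil at the root is 0).\<close>
definition sub_feas :: "'n msinst \<Rightarrow> 'n \<Rightarrow> (nat \<Rightarrow> real) \<Rightarrow> real \<Rightarrow> (nat \<Rightarrow> nat \<Rightarrow> real) \<Rightarrow> real \<Rightarrow> bool" where
  "sub_feas I n X etap yv uv \<longleftrightarrow>
     (\<forall>i<nM I. \<forall>j<nN I. yv i j \<ge> 0)
   \<and> (\<forall>j<nN I. (\<Sum>i<nM I. yv i j) = dem I n j)
   \<and> (\<forall>i<nM I. Bop I n yv i \<le> X i)
   \<and> (n \<noteq> root I \<longrightarrow> uv \<ge> 0 \<and> uv - cdot I n yv \<ge> fdot I n X - etap)"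

definition sub_obj :: "'n msinst \<Rightarrow> 'n \<Rightarrow> (nat \<Rightarrow> nat \<Rightarrow> real) \<Rightarrow> real \<Rightarrow> real" where
  "sub_obj I n yv uv = (\<Sum>i<nM I. \<Sum>j<nN I. ctil I n i j * yv i j) + atil I n * uv"

definition sub_opt :: "'n msinst \<Rightarrow> 'n \<Rightarrow> (nat \<Rightarrow> real) \<Rightarrow> real \<Rightarrow> (nat \<Rightarrow> nat \<Rightarrow> real) \<Rightarrow> real \<Rightarrow> bool" where
  "sub_opt I n X etap yv uv \<longleftrightarrow> sub_feas I n X etap yv uv \<and>
     (\<forall>yv' uv'. sub_feas I n X etap yv' uv' \<longrightarrow> sub_obj I n yv uv \<le> sub_obj I n yv' uv')"

definition capmax :: "'n msinst \<Rightarrow> ('n \<Rightarrow> nat \<Rightarrow> nat \<Rightarrow> real) \<Rightarrow> 'n \<Rightarrow> nat \<Rightarrow> int" where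
  "capmax I y n i = Max ((\<lambda>m. \<lceil>Bop I m (y m) i\<rceil>) ` path I n)"

text \<open>One iteration (a)+(b) of Step 2 of Algorithm 1: from s = iterate k to s' = iterate k+1.\<close>
definition alg_step :: "'n msinst \<Rightarrow> 'n sol \<Rightarrow> 'n sol \<Rightarrow> bool" where
  "alg_step I s s' = (case s of (x, eta, y, u) \<Rightarrow> case s' of (x', eta', y', u') \<Rightarrow>
     (\<forall>n\<in>nodes I. \<forall>i<nM I.
        x' n i = (if n = root I then real_of_int (capmax I y n i)
                  else real_of_int (capmax I y n i) - real_of_int (capmax I y (par I n) i)))
   \<and> (\<forall>n\<in>nodes I. \<not> is_leaf I n \<longrightarrow>
        eta' n = Max ((\<lambda>m. fdot I m (cumx I x' m) + cdot I m (y m) - u m) ` children I n))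
   \<and> (\<forall>n\<in>nodes I. sub_opt I n (cumx I x' n) (eta' (par I n)) (y' n) (u' n)))"

definition close_sol :: "'n msinst \<Rightarrow> real \<Rightarrow> 'n sol \<Rightarrow> 'n sol \<Rightarrow> bool" where
  "close_sol I eps s s' = (case s of (x, eta, y, u) \<Rightarrow> case s' of (x', eta', y', u') \<Rightarrow>
     (\<forall>n\<in>nodes I.
        (\<forall>i<nM I. \<bar>x n i - x' n i\<bar> < eps)
      \<and> (\<forall>i<nM I. \<forall>j<nN I. \<bar>y n i j - y' n i j\<bar> < eps)
      \<and> (\<not> is_leaf I n \<longrightarrow> \<bar>eta n - eta' n\<bar> < eps)
      \<and> (n \<noteq> root I \<longrightarrow> \<bar>u n - u' n\<bar> < eps)))"

definition alg_output :: "'n msinst \<Rightarrow> real \<Rightarrow> 'n sol \<Rightarrow> bool" where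
  "alg_output I eps sH \<longleftrightarrow>
     (\<exists>sLP. optimal_LP I sLP \<and>
       ((\<forall>n\<in>nodes I. \<forall>i<nM I. fst sLP n i \<in> \<int>) \<and> sH = sLP
        \<or> \<not> (\<forall>n\<in>nodes I. \<forall>i<nM I. fst sLP n i \<in> \<int>) \<and>
          (\<exists>S :: nat \<Rightarrow> 'n sol. \<exists>K \<ge> 1.
             S 0 = sLP \<and> (\<forall>k<K. alg_step I (S k) (S (Suc k)))
           \<and> (\<forall>k. 1 \<le> k \<and> k < K \<longrightarrow> \<not> close_sol I eps (S (k - 1)) (S k))
           \<and> close_sol I eps (S (K - 1)) (S K) \<and> sH = S K)))"

definition hmax :: "'n msinst \<Rightarrow> real" where
  "hmax I = Max ((\<lambda>i. hc I 1 i) ` {..<nM I})"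

definition fmax :: "'n msinst \<Rightarrow> nat \<Rightarrow> real" where
  "fmax I t = Max ((\<lambda>i. fc I t i) ` {..<nM I})"

definition fmin :: "'n msinst \<Rightarrow> nat \<Rightarrow> real" where
  "fmin I t = Min ((\<lambda>i. fc I t i) ` {..<nM I})"

definition cmin :: "'n msinst \<Rightarrow> nat \<Rightarrow> real" where
  "cmin I t = Min ((\<lambda>(i, j). cc I t i j) ` ({..<nM I} \<times> {..<nN I}))"

definition Mmin :: "'n msinst \<Rightarrow> real" where
  "Mmin I = real_of_int \<lceil>(\<Sum>j<nN I. dem I (root I) j) / hmax I\<rceil>"

definition dmin :: "'n msinst \<Rightarrow> nat \<Rightarrow> real" where
  "dmin I t = Min ((\<lambda>n. \<Sum>j<nN I. dem I n j) ` stage I t)"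

end

theory Submission imports Defs begin

locale vinst = fixes I :: "'n msinst" assumes V: "valid_inst I"
begin

lemma T2: "nT I \<ge> 2" and M1: "nM I \<ge> 1" and N1: "nN I \<ge> 1"
  using V unfolding valid_inst_def by auto
lemma fc_nn: "1 \<le> t \<Longrightarrow> t \<le> nT I \<Longrightarrow> i < nM I \<Longrightarrow> 0 \<le> fc I t i"
  using V unfolding valid_inst_def by auto
lemma hc_pos: "1 \<le> t \<Longrightarrow> t \<le> nT I \<Longrightarrow> i < nM I \<Longrightarrow> 0 < hc I t i"
  using V unfolding valid_inst_def by auto
lemma cc_nn: "1 \<le> t \<Longrightarrow> t \<le> nT I \<Longrightarrow> i < nM I \<Longrightarrow> j < nN I \<Longrightarrow> 0 \<le> cc I t i j"
  using V unfolding valid_inst_def by auto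
lemma lam_b: "2 \<le> t \<Longrightarrow> t \<le> nT I \<Longrightarrow> 0 \<le> lam I t \<and> lam I t \<le> 1 \<and> 0 < alp I t \<and> alp I t < 1"
  using V unfolding valid_inst_def by auto
lemma fin: "finite (nodes I)" and root_in: "root I \<in> nodes I" and dep_root: "dep I (root I) = 1"
  using V unfolding valid_inst_def by auto
lemma par_in: "n \<in> nodes I \<Longrightarrow> n \<noteq> root I \<Longrightarrow> par I n \<in> nodes I"
  and dep_par: "n \<in> nodes I \<Longrightarrow> n \<noteq> root I \<Longrightarrow> dep I n = dep I (par I n) + 1"
  using V unfolding valid_inst_def by auto
lemma dep_le: "n \<in> nodes I \<Longrightarrow> dep I n \<le> nT I"
  using V unfolding valid_inst_def by auto
lemma ch_ne: "n \<in> nodes I \<Longrightarrow> dep I n < nT I \<Longrightarrow> children I n \<noteq> {}"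
  using V unfolding valid_inst_def by auto
lemma prob_pos: "n \<in> nodes I \<Longrightarrow> 0 < prob I n"
  using V unfolding valid_inst_def by auto
lemma stage_sum: "1 \<le> t \<Longrightarrow> t \<le> nT I \<Longrightarrow> (\<Sum>n\<in>stage I t. prob I n) = 1"
  using V unfolding valid_inst_def by auto
lemma ch_sum: "n \<in> nodes I \<Longrightarrow> dep I n < nT I \<Longrightarrow> (\<Sum>m\<in>children I n. prob I m) = prob I n"
  using V unfolding valid_inst_def by auto
lemma dem_nn: "n \<in> nodes I \<Longrightarrow> j < nN I \<Longrightarrow> 0 \<le> dem I n j"
  using V unfolding valid_inst_def by auto

lemma dep_ge1: "n \<in> nodes I \<Longrightarrow> 1 \<le> dep I n"
  using dep_root dep_par by (cases "n = root I") auto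
lemma dep_nonroot: "n \<in> nodes I \<Longrightarrow> n \<noteq> root I \<Longrightarrow> 2 \<le> dep I n"
  using dep_ge1 dep_par par_in by fastforce
lemma root_iff: "n \<in> nodes I \<Longrightarrow> (n = root I \<longleftrightarrow> dep I n = 1)"
  using dep_root dep_nonroot by fastforce

lemma funpow_par: "n \<in> nodes I \<Longrightarrow> k < dep I n \<Longrightarrow>
   (par I ^^ k) n \<in> nodes I \<and> dep I ((par I ^^ k) n) = dep I n - k"
proof (induction k)
  case 0 then show ?case by simp
next
  case (Suc k)
  define m where "m = (par I ^^ k) n"
  have m: "m \<in> nodes I" "dep I m = dep I n - k" using Suc m_def by auto
  have "m \<noteq> root I" using m Suc.prems dep_root by auto
  then show ?case using m par_in dep_par unfolding m_def[symmetric] by (simp add: m_def)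
qed

lemma path_sub: "n \<in> nodes I \<Longrightarrow> path I n \<subseteq> nodes I"
  unfolding path_def using funpow_par by blast
lemma path_dep: "n \<in> nodes I \<Longrightarrow> l \<in> path I n \<Longrightarrow> dep I l \<le> dep I n"
  unfolding path_def using funpow_par by fastforce
lemma self_in_path: "n \<in> nodes I \<Longrightarrow> n \<in> path I n"
  unfolding path_def using dep_ge1[of n] by (auto intro!: exI[of _ 0])
lemma path_img: "path I n = (\<lambda>k. (par I ^^ k) n) ` {..<dep I n}"
  unfolding path_def by auto
lemma finite_path: "finite (path I n)"
  unfolding path_img by simp
lemma path_root: "path I (root I) = {root I}"
  unfolding path_def dep_root by auto
lemma path_step: assumes "n \<in> nodes I" "n \<noteq> root I"
  shows "path I n = insert n (path I (par I n))"
proof -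
  have d: "dep I n = Suc (dep I (par I n))" using dep_par assms by simp
  show ?thesis
  proof (intro set_eqI iffI)
    fix m assume "m \<in> path I n"
    then obtain k where k: "k < dep I n" "m = (par I ^^ k) n" unfolding path_def by auto
    show "m \<in> insert n (path I (par I n))"
    proof (cases k)
      case 0 then show ?thesis using k by simp
    next
      case (Suc k')
      then have "m = (par I ^^ k') (par I n)" using k by (simp only: funpow_Suc_right comp_def)
      then show ?thesis using k Suc d unfolding path_def by auto
    qed
  next
    fix m assume "m \<in> insert n (path I (par I n))"
    then show "m \<in> path I n"
    proof
      assume "m = n" then show ?thesis using self_in_path assms by simp
    next
      assume "m \<in> path I (par I n)"
      then obtain k where k: "k < dep I (par I n)" "m = (par I ^^ k) (par I n)" unfolding path_def by auto
      then have "m = (par I ^^ Suc k) n" by (simp only: funpow_Suc_right comp_def)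
      then show ?thesis using k d unfolding path_def by auto
    qed
  qed
qed

lemma path_trans: assumes "n \<in> nodes I" "l \<in> path I n" shows "path I l \<subseteq> path I n"
proof
  fix m assume m: "m \<in> path I l"
  obtain k where k: "k < dep I n" "l = (par I ^^ k) n" using assms unfolding path_def by auto
  have dl: "dep I l = dep I n - k" using funpow_par[OF assms(1) k(1)] k by simp
  obtain j where j: "j < dep I l" "m = (par I ^^ j) l" using m unfolding path_def by auto
  have "m = (par I ^^ (j + k)) n" using j k by (simp add: funpow_add)
  moreover have "j + k < dep I n" using j dl k by simp
  ultimately show "m \<in> path I n" unfolding path_def by auto
qed

lemma root_in_path: assumes "n \<in> nodes I" shows "root I \<in> path I n"
proof -
  define k where "k = dep I n - 1"
  have k: "k < dep I n" using dep_ge1[OF assms] k_def by simp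
  have "dep I ((par I ^^ k) n) = 1" "(par I ^^ k) n \<in> nodes I"
    using funpow_par[OF assms k] k_def dep_ge1[OF assms] by auto
  then have "(par I ^^ k) n = root I" using root_iff by blast
  then show ?thesis using k unfolding path_def by blast
qed

lemma tele: assumes "n \<in> nodes I"
  and "\<forall>m\<in>nodes I. xx m = (if m = root I then c m else c m - c (par I m))"
  shows "(\<Sum>m\<in>path I n. xx m) = (c n :: real)"
  using assms(1)
proof (induction "dep I n" arbitrary: n rule: less_induct)
  case less
  show ?case
  proof (cases "n = root I")
    case True then show ?thesis using assms(2) root_in by (simp add: path_root)
  next
    case False
    have pn: "par I n \<in> nodes I" "dep I (par I n) < dep I n" using False less.prems par_in dep_par by auto
    have "n \<notin> path I (par I n)" using path_dep[OF pn(1)] pn(2) by fastforce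
    then have "(\<Sum>m\<in>path I n. xx m) = xx n + (\<Sum>m\<in>path I (par I n). xx m)"
      using path_step[OF less.prems False] finite_path by simp
    also have "\<dots> = c n" using less.hyps[OF pn(2) pn(1)] assms(2) less.prems False by simp
    finally show ?thesis .
  qed
qed


lemma capmax_ge: "n \<in> nodes I \<Longrightarrow> \<lceil>Bop I n (y n) i\<rceil> \<le> capmax I y n i"
  unfolding capmax_def using self_in_path finite_path by (intro Max_ge) auto

lemma capmax_mono: "n \<in> nodes I \<Longrightarrow> l \<in> path I n \<Longrightarrow> capmax I y l i \<le> capmax I y n i"
  unfolding capmax_def
  apply (rule Max_mono)
  using path_trans self_in_path path_sub finite_path by blast+

lemma capmax_le: "n \<in> nodes I \<Longrightarrow> (\<forall>l\<in>path I n. Bop I l (y l) i \<le> C) \<Longrightarrow> capmax I y n i \<le> \<lceil>C\<rceil>"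
  unfolding capmax_def
  apply (rule Max.boundedI)
  using self_in_path finite_path by (auto intro: ceiling_mono)

definition Pinv :: "'n sol \<Rightarrow> bool" where
 "Pinv s = (case s of (x,eta,y,u) \<Rightarrow> (\<forall>n\<in>nodes I. (\<forall>i<nM I. \<forall>j<nN I. 0 \<le> y n i j)
    \<and> (\<forall>j<nN I. (\<Sum>i<nM I. y n i j) = dem I n j) \<and> (\<forall>i<nM I. Bop I n (y n) i \<le> cumx I x n i)
    \<and> (n \<noteq> root I \<longrightarrow> 0 \<le> u n \<and> fdot I n (cumx I x n) + cdot I n (y n) \<le> u n + eta (par I n)))
   \<and> (\<forall>n\<in>nodes I. \<forall>l\<in>path I n. \<forall>i<nM I. cumx I x l i \<le> cumx I x n i))"

lemma cumx_mono_nn: assumes "\<forall>m\<in>nodes I. \<forall>i<nM I. 0 \<le> x m i" "n \<in> nodes I" "l \<in> path I n" "i < nM I"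
  shows "cumx I x l i \<le> cumx I x n i"
  unfolding cumx_def
  apply (rule sum_mono2[OF finite_path path_trans[OF assms(2,3)]])
  using assms path_sub by blast

lemma LP_Pinv: "feasible_LP I (x,eta,y,u) \<Longrightarrow> Pinv (x,eta,y,u)"
  unfolding Pinv_def feasible_LP_def using cumx_mono_nn
  by (simp add: add.commute)

lemma step_cum: assumes "alg_step I (x,eta,y,u) (x',eta',y',u')" "n \<in> nodes I" "i < nM I"
  shows "cumx I x' n i = capmax I y n i"
  unfolding cumx_def
  apply (rule tele[OF assms(2)])
  using assms unfolding alg_step_def by auto

lemma step_Pinv: assumes "alg_step I (x,eta,y,u) (x',eta',y',u')"
  shows "Pinv (x',eta',y',u')"
proof -
  have so: "\<forall>n\<in>nodes I. sub_opt I n (cumx I x' n) (eta' (par I n)) (y' n) (u' n)"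
    using assms unfolding alg_step_def by auto
  have mono: "\<forall>n\<in>nodes I. \<forall>l\<in>path I n. \<forall>i<nM I. cumx I x' l i \<le> cumx I x' n i"
    using step_cum[OF assms] capmax_mono path_sub by (metis of_int_le_iff subsetD)
  show ?thesis unfolding Pinv_def using so mono unfolding sub_opt_def sub_feas_def by auto
qed

lemma step_ceil: assumes "Pinv (x,eta,y,u)" "alg_step I (x,eta,y,u) (x',eta',y',u')" "n \<in> nodes I" "i < nM I"
  shows "cumx I x' n i \<le> of_int \<lceil>cumx I x n i\<rceil>"
proof -
  have "\<forall>l\<in>path I n. Bop I l (y l) i \<le> cumx I x n i"
  proof
    fix l assume l: "l \<in> path I n"
    then have "l \<in> nodes I" using path_sub assms by auto
    then have "Bop I l (y l) i \<le> cumx I x l i" using assms(1,4) unfolding Pinv_def by auto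
    also have "\<dots> \<le> cumx I x n i" using assms(1,3,4) l unfolding Pinv_def by auto
    finally show "Bop I l (y l) i \<le> cumx I x n i" .
  qed
  then show ?thesis using step_cum[OF assms(2-4)] capmax_le[OF assms(3)] by simp
qed


definition fsum :: "nat \<Rightarrow> real" where "fsum t = (\<Sum>i<nM I. fc I t i)"

lemma zMS_alt: "zMS I (x,eta,y,u) = (\<Sum>n\<in>nodes I. prob I n *
   ((\<Sum>i<nM I. ftil I n i * cumx I x n i) + sub_obj I n (y n) (u n) + ltil I n * eta n))"
  unfolding zMS_def sub_obj_def by (simp add: algebra_simps)

lemma ftil_nn: "n \<in> nodes I \<Longrightarrow> i < nM I \<Longrightarrow> 0 \<le> ftil I n i"
  unfolding ftil_def using fc_nn dep_ge1 dep_le dep_nonroot lam_b by auto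

lemma ltil_nn: "n \<in> nodes I \<Longrightarrow> 0 \<le> ltil I n"
  unfolding ltil_def is_leaf_def using lam_b dep_ge1 dep_le
  by (smt (verit) Suc_eq_plus1 Suc_le_eq le_antisym not_less_eq_eq one_add_one)

lemma child_facts: "m \<in> children I n \<Longrightarrow> m \<in> nodes I \<and> m \<noteq> root I \<and> par I m = n"
  unfolding children_def by auto

lemma step_cost: assumes P: "Pinv (x,eta,y,u)" and A: "alg_step I (x,eta,y,u) (x',eta',y',u')"
  and d: "0 \<le> \<delta>" and B: "\<forall>n\<in>nodes I. \<forall>i<nM I. cumx I x' n i \<le> cumx I x n i + \<delta>"
  shows "zMS I (x',eta',y',u') \<le> zMS I (x,eta,y,u) +
     \<delta> * (\<Sum>n\<in>nodes I. prob I n * ((\<Sum>i<nM I. ftil I n i) + ltil I n * fsum (dep I n + 1)))"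
proof -
  have so: "\<And>n. n \<in> nodes I \<Longrightarrow> sub_opt I n (cumx I x' n) (eta' (par I n)) (y' n) (u' n)"
    and et: "\<And>n. n \<in> nodes I \<Longrightarrow> \<not> is_leaf I n \<Longrightarrow>
        eta' n = Max ((\<lambda>m. fdot I m (cumx I x' m) + cdot I m (y m) - u m) ` children I n)"
    using A unfolding alg_step_def by auto
  have fdot_le: "fdot I m (cumx I x' m) \<le> fdot I m (cumx I x m) + \<delta> * fsum (dep I m)" if m: "m \<in> nodes I" for m
  proof -
    have "fdot I m (cumx I x' m) \<le> (\<Sum>i<nM I. fc I (dep I m) i * (cumx I x m i + \<delta>))"
      unfolding fdot_def
      apply (rule sum_mono) apply (rule mult_left_mono)
      using B m fc_nn dep_ge1 dep_le by auto
    also have "\<dots> = fdot I m (cumx I x m) + \<delta> * fsum (dep I m)"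
      unfolding fdot_def fsum_def by (simp add: algebra_simps sum.distrib sum_distrib_left)
    finally show ?thesis .
  qed
  have node: "prob I n * ((\<Sum>i<nM I. ftil I n i * cumx I x' n i) + sub_obj I n (y' n) (u' n) + ltil I n * eta' n)
     \<le> prob I n * ((\<Sum>i<nM I. ftil I n i * cumx I x n i) + sub_obj I n (y n) (u n) + ltil I n * eta n)
       + \<delta> * (prob I n * ((\<Sum>i<nM I. ftil I n i) + ltil I n * fsum (dep I n + 1)))"
    if n: "n \<in> nodes I" for n
  proof -
    have i1: "(\<Sum>i<nM I. ftil I n i * cumx I x' n i) \<le> (\<Sum>i<nM I. ftil I n i * cumx I x n i) + \<delta> * (\<Sum>i<nM I. ftil I n i)"
    proof -
      have "(\<Sum>i<nM I. ftil I n i * cumx I x' n i) \<le> (\<Sum>i<nM I. ftil I n i * (cumx I x n i + \<delta>))"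
        apply (rule sum_mono) apply (rule mult_left_mono) using B n ftil_nn by auto
      then show ?thesis by (simp add: algebra_simps sum.distrib sum_distrib_left)
    qed
    have i2: "sub_obj I n (y' n) (u' n) \<le> sub_obj I n (y n) (u n)"
    proof -
      have "sub_feas I n (cumx I x' n) (eta' (par I n)) (y n) (u n)"
        unfolding sub_feas_def
      proof (intro conjI allI impI)
        show "\<And>i j. i < nM I \<Longrightarrow> j < nN I \<Longrightarrow> 0 \<le> y n i j"
          "\<And>j. j < nN I \<Longrightarrow> (\<Sum>i<nM I. y n i j) = dem I n j"
          using P n unfolding Pinv_def by auto
        show "Bop I n (y n) i \<le> cumx I x' n i" if "i < nM I" for i
        proof -
          have "Bop I n (y n) i \<le> of_int \<lceil>Bop I n (y n) i\<rceil>" by simp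
          also have "\<dots> \<le> of_int (capmax I y n i)" using capmax_ge[OF n] by simp
          finally show ?thesis using step_cum[OF A n that] by simp
        qed
        assume nr: "n \<noteq> root I"
        show "0 \<le> u n" using P n nr unfolding Pinv_def by auto
        have pn: "par I n \<in> nodes I" "\<not> is_leaf I (par I n)" "n \<in> children I (par I n)"
          using par_in[OF n nr] dep_par[OF n nr] dep_le[OF n] n nr
          unfolding is_leaf_def children_def by auto
        have fc: "finite (children I (par I n))" using fin unfolding children_def by auto
        have "fdot I n (cumx I x' n) + cdot I n (y n) - u n \<le> eta' (par I n)"
          unfolding et[OF pn(1,2)] using fc pn(3) by (intro Max_ge) auto
        then show "fdot I n (cumx I x' n) - eta' (par I n) \<le> u n - cdot I n (y n)" by simp
      qed
      then show ?thesis using so[OF n] unfolding sub_opt_def by blast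
    qed
    have i3: "ltil I n * eta' n \<le> ltil I n * eta n + \<delta> * (ltil I n * fsum (dep I n + 1))"
    proof (cases "is_leaf I n")
      case True then show ?thesis unfolding ltil_def by simp
    next
      case False
      have fc: "finite (children I n)" using fin unfolding children_def by auto
      have ne: "children I n \<noteq> {}" using ch_ne[OF n] False dep_le[OF n] unfolding is_leaf_def by auto
      have "eta' n \<le> eta n + \<delta> * fsum (dep I n + 1)"
        unfolding et[OF n False]
      proof (rule Max.boundedI)
        show "finite ((\<lambda>m. fdot I m (cumx I x' m) + cdot I m (y m) - u m) ` children I n)" using fc by simp
        show "(\<lambda>m. fdot I m (cumx I x' m) + cdot I m (y m) - u m) ` children I n \<noteq> {}" using ne by simp
        fix a assume "a \<in> (\<lambda>m. fdot I m (cumx I x' m) + cdot I m (y m) - u m) ` children I n"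
        then obtain m where m: "m \<in> children I n" "a = fdot I m (cumx I x' m) + cdot I m (y m) - u m" by auto
        have mm: "m \<in> nodes I" "m \<noteq> root I" "par I m = n" using child_facts[OF m(1)] by auto
        have dm: "dep I m = dep I n + 1" using dep_par[OF mm(1,2)] mm(3) by simp
        have "fdot I m (cumx I x m) + cdot I m (y m) \<le> u m + eta n"
          using P mm unfolding Pinv_def by auto
        then show "a \<le> eta n + \<delta> * fsum (dep I n + 1)" using fdot_le[OF mm(1)] m(2) dm by simp
      qed
      then have "ltil I n * eta' n \<le> ltil I n * (eta n + \<delta> * fsum (dep I n + 1))"
        using ltil_nn[OF n] by (rule mult_left_mono)
      then show ?thesis by (simp add: algebra_simps)
    qed
    have "(\<Sum>i<nM I. ftil I n i * cumx I x' n i) + sub_obj I n (y' n) (u' n) + ltil I n * eta' n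
      \<le> ((\<Sum>i<nM I. ftil I n i * cumx I x n i) + sub_obj I n (y n) (u n) + ltil I n * eta n)
        + \<delta> * ((\<Sum>i<nM I. ftil I n i) + ltil I n * fsum (dep I n + 1))"
      using i1 i2 i3 by (simp add: algebra_simps)
    then have "prob I n * ((\<Sum>i<nM I. ftil I n i * cumx I x' n i) + sub_obj I n (y' n) (u' n) + ltil I n * eta' n)
      \<le> prob I n * (((\<Sum>i<nM I. ftil I n i * cumx I x n i) + sub_obj I n (y n) (u n) + ltil I n * eta n)
        + \<delta> * ((\<Sum>i<nM I. ftil I n i) + ltil I n * fsum (dep I n + 1)))"
      using prob_pos[OF n] by (intro mult_left_mono) auto
    then show ?thesis by (simp add: algebra_simps)
  qed
  show ?thesis
    unfolding zMS_alt sum_distrib_left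
    using sum_mono[OF node] by (simp add: sum.distrib)
qed


lemma dep_range: "n \<in> nodes I \<Longrightarrow> dep I n \<in> {1..nT I}"
  using dep_ge1 dep_le by auto

lemma stage_group: "(\<Sum>n\<in>nodes I. h n) = (\<Sum>t=1..nT I. \<Sum>n\<in>stage I t. h n)"
  unfolding stage_def
  by (rule sum.group[symmetric, OF fin]) (use dep_range in auto)

lemma stage_const: "1 \<le> t \<Longrightarrow> t \<le> nT I \<Longrightarrow> (\<Sum>n\<in>stage I t. prob I n * c) = c"
  using stage_sum by (simp add: sum_distrib_right[symmetric])

lemma stage_in: "n \<in> stage I t \<Longrightarrow> n \<in> nodes I \<and> dep I n = t"
  unfolding stage_def by auto

lemma gsum_aux: "1 \<le> (T::nat) \<Longrightarrow> (\<Sum>t=1..T. (if t = 1 then F t else (1 - L t) * F t) + (if t = T then 0 else L (t+1) * F (t+1)))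
   = (\<Sum>t=1..T. F t :: real)"
proof (induction T rule: dec_induct)
  case base then show ?case by simp
next
  case (step T)
  have "(\<Sum>t=1..Suc T. (if t = 1 then F t else (1 - L t) * F t) + (if t = Suc T then 0 else L (t+1) * F (t+1)))
    = (\<Sum>t=1..T. (if t = 1 then F t else (1 - L t) * F t) + (if t = Suc T then 0 else L (t+1) * F (t+1)))
      + (1 - L (Suc T)) * F (Suc T)" using step.hyps by simp
  also have "(\<Sum>t=1..T. (if t = 1 then F t else (1 - L t) * F t) + (if t = Suc T then 0 else L (t+1) * F (t+1)))
    = (\<Sum>t=1..T. (if t = 1 then F t else (1 - L t) * F t) + (if t = T then 0 else L (t+1) * F (t+1))) + L (Suc T) * F (Suc T)"
  proof -
    have "(\<Sum>t=1..T. (if t = 1 then F t else (1 - L t) * F t) + (if t = Suc T then 0 else L (t+1) * F (t+1)))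
      = (\<Sum>t=1..T. ((if t = 1 then F t else (1 - L t) * F t) + (if t = T then 0 else L (t+1) * F (t+1)))
          + (if t = T then L (Suc T) * F (Suc T) else 0))"
      by (rule sum.cong) auto
    also have "\<dots> = (\<Sum>t=1..T. (if t = 1 then F t else (1 - L t) * F t) + (if t = T then 0 else L (t+1) * F (t+1))) + L (Suc T) * F (Suc T)"
      using step.hyps by (simp add: sum.distrib)
    finally show ?thesis .
  qed
  finally show ?case using step.IH step.hyps by (simp add: algebra_simps)
qed

lemma G_sum: "(\<Sum>n\<in>nodes I. prob I n * ((\<Sum>i<nM I. ftil I n i) + ltil I n * fsum (dep I n + 1)))
   = (\<Sum>t=1..nT I. fsum t)"
proof -
  define g where "g t = (if t = 1 then fsum t else (1 - lam I t) * fsum t) + (if t = nT I then 0 else lam I (t+1) * fsum (t+1))" for t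
  have "(\<Sum>n\<in>nodes I. prob I n * ((\<Sum>i<nM I. ftil I n i) + ltil I n * fsum (dep I n + 1)))
     = (\<Sum>t=1..nT I. \<Sum>n\<in>stage I t. prob I n * ((\<Sum>i<nM I. ftil I n i) + ltil I n * fsum (dep I n + 1)))"
    by (rule stage_group)
  also have "\<dots> = (\<Sum>t=1..nT I. \<Sum>n\<in>stage I t. prob I n * g t)"
  proof (intro sum.cong refl)
    fix t n assume n: "n \<in> stage I t"
    have nn: "n \<in> nodes I" "dep I n = t" using stage_in[OF n] by auto
    have "(\<Sum>i<nM I. ftil I n i) = (if t = 1 then fsum t else (1 - lam I t) * fsum t)"
      unfolding ftil_def fsum_def using root_iff[OF nn(1)] nn(2) by (auto simp: sum_distrib_left)
    then show "prob I n * ((\<Sum>i<nM I. ftil I n i) + ltil I n * fsum (dep I n + 1)) = prob I n * g t"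
      unfolding g_def ltil_def is_leaf_def using nn(2) by simp
  qed
  also have "\<dots> = (\<Sum>t=1..nT I. g t)" by (intro sum.cong refl stage_const) auto
  also have "\<dots> = (\<Sum>t=1..nT I. fsum t)" unfolding g_def by (rule gsum_aux) (use T2 in auto)
  finally show ?thesis .
qed

lemma fsum_le: "fsum t \<le> real (nM I) * fmax I t"
proof -
  have "fsum t \<le> (\<Sum>i<nM I. fmax I t)" unfolding fsum_def fmax_def
    by (rule sum_mono) (rule Max_ge, auto)
  then show ?thesis by simp
qed

lemma fmax_nn: "1 \<le> t \<Longrightarrow> t \<le> nT I \<Longrightarrow> 0 \<le> fmax I t"
proof -
  assume t: "1 \<le> t" "t \<le> nT I"
  have "fc I t 0 \<le> fmax I t" unfolding fmax_def using M1 by (intro Max_ge) auto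
  then show ?thesis using fc_nn[OF t, of 0] M1 by linarith
qed


lemma regroup: "(\<Sum>n\<in>nodes I. prob I n * (ltil I n * eta n))
   = (\<Sum>m\<in>nodes I - {root I}. prob I m * (lam I (dep I m) * eta (par I m)))"
proof -
  have "(\<Sum>m\<in>nodes I - {root I}. prob I m * (lam I (dep I m) * eta (par I m)))
     = (\<Sum>n\<in>nodes I. \<Sum>m\<in>{m. m \<in> nodes I - {root I} \<and> par I m = n}. prob I m * (lam I (dep I m) * eta (par I m)))"
    by (rule sum.group[symmetric]) (use fin par_in in auto)
  also have "\<dots> = (\<Sum>n\<in>nodes I. prob I n * (ltil I n * eta n))"
  proof (intro sum.cong refl)
    fix n assume n: "n \<in> nodes I"
    have cs: "{m. m \<in> nodes I - {root I} \<and> par I m = n} = children I n" unfolding children_def by auto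
    have "(\<Sum>m\<in>children I n. prob I m * (lam I (dep I m) * eta (par I m)))
        = (\<Sum>m\<in>children I n. prob I m * (lam I (dep I n + 1) * eta n))"
      by (rule sum.cong) (use child_facts dep_par in auto)
    also have "\<dots> = (\<Sum>m\<in>children I n. prob I m) * (lam I (dep I n + 1) * eta n)"
      by (simp add: sum_distrib_right)
    also have "\<dots> = prob I n * (ltil I n * eta n)"
    proof (cases "dep I n < nT I")
      case True then show ?thesis using ch_sum[OF n] unfolding ltil_def is_leaf_def by simp
    next
      case False
      have "children I n = {}"
      proof (rule ccontr)
        assume "children I n \<noteq> {}"
        then obtain m where "m \<in> children I n" by auto
        then have "m \<in> nodes I" "m \<noteq> root I" "par I m = n" using child_facts by auto
        then show False using dep_par dep_le False by fastforce
      qed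
      then show ?thesis using False dep_le[OF n] unfolding ltil_def is_leaf_def by simp
    qed
    finally show "(\<Sum>m\<in>{m. m \<in> nodes I - {root I} \<and> par I m = n}. prob I m * (lam I (dep I m) * eta (par I m)))
       = prob I n * (ltil I n * eta n)" unfolding cs .
  qed
  finally show ?thesis by simp
qed

definition wt :: "'n \<Rightarrow> real" where "wt n = (if n = root I then 1 else 1 - lam I (dep I n))"

lemma ftil_sum: "(\<Sum>i<nM I. ftil I n i * X i) = wt n * fdot I n X"
  unfolding ftil_def wt_def fdot_def by (auto simp: sum_distrib_left algebra_simps)

lemma ctil_sum: "(\<Sum>i<nM I. \<Sum>j<nN I. ctil I n i j * yv i j) = wt n * cdot I n yv"
  unfolding ctil_def wt_def cdot_def by (auto simp: sum_distrib_left algebra_simps)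

lemma zMS_ge_Z: assumes F: "feasible_LP I (x,eta,y,u)"
  shows "(\<Sum>n\<in>nodes I. prob I n * (fdot I n (cumx I x n) + cdot I n (y n))) \<le> zMS I (x,eta,y,u)"
proof -
  define Z where "Z n = fdot I n (cumx I x n) + cdot I n (y n)" for n
  have z: "zMS I (x,eta,y,u) = (\<Sum>n\<in>nodes I. prob I n * Z n)
      + (\<Sum>n\<in>nodes I. prob I n * ((wt n - 1) * Z n + atil I n * u n))
      + (\<Sum>n\<in>nodes I. prob I n * (ltil I n * eta n))"
    unfolding zMS_def Z_def prod.case ftil_sum ctil_sum
    by (simp add: sum.distrib[symmetric] algebra_simps)
  have r: "(\<Sum>n\<in>nodes I. prob I n * ((wt n - 1) * Z n + atil I n * u n))
     = (\<Sum>n\<in>nodes I - {root I}. prob I n * ((wt n - 1) * Z n + atil I n * u n))"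
    using sum.remove[OF fin root_in, of "\<lambda>n. prob I n * ((wt n - 1) * Z n + atil I n * u n)"]
    unfolding wt_def atil_def by simp
  have "0 \<le> (\<Sum>n\<in>nodes I - {root I}. prob I n * ((wt n - 1) * Z n + atil I n * u n)
          + prob I n * (lam I (dep I n) * eta (par I n)))"
  proof (rule sum_nonneg)
    fix n assume n: "n \<in> nodes I - {root I}"
    have nn: "n \<in> nodes I" "n \<noteq> root I" using n by auto
    have lb: "0 \<le> lam I (dep I n)" "0 < alp I (dep I n)" "alp I (dep I n) < 1"
      using lam_b dep_nonroot[OF nn] dep_le[OF nn(1)] by auto
    have u: "0 \<le> u n" "Z n \<le> u n + eta (par I n)"
      using F nn unfolding feasible_LP_def Z_def by auto
    have "u n \<le> u n / (1 - alp I (dep I n))"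
      using lb u by (simp add: divide_simps mult_left_le)
    then have "lam I (dep I n) * u n \<le> lam I (dep I n) * (u n / (1 - alp I (dep I n)))"
      using lb(1) by (rule mult_left_mono)
    then have "lam I (dep I n) * u n \<le> atil I n * u n"
      unfolding atil_def using nn by simp
    moreover have "lam I (dep I n) * Z n \<le> lam I (dep I n) * (u n + eta (par I n))"
      using u lb by (simp add: mult_left_mono)
    ultimately have "0 \<le> (wt n - 1) * Z n + atil I n * u n + lam I (dep I n) * eta (par I n)"
      unfolding wt_def using nn by (simp add: algebra_simps)
    then show "0 \<le> prob I n * ((wt n - 1) * Z n + atil I n * u n) + prob I n * (lam I (dep I n) * eta (par I n))"
      using prob_pos[OF nn(1)] by (simp add: distrib_left[symmetric])
  qed
  then have "(\<Sum>n\<in>nodes I. prob I n * Z n) \<le> zMS I (x,eta,y,u)"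
    unfolding z r regroup by (simp add: sum.distrib)
  then show ?thesis unfolding Z_def .
qed


lemma fmin_props: "1 \<le> t \<Longrightarrow> t \<le> nT I \<Longrightarrow> 0 \<le> fmin I t \<and> (\<forall>i<nM I. fmin I t \<le> fc I t i)"
  unfolding fmin_def using M1 fc_nn by (auto intro!: Min.boundedI Min_le simp: lessThan_empty_iff)

lemma cmin_props: "1 \<le> t \<Longrightarrow> t \<le> nT I \<Longrightarrow> 0 \<le> cmin I t \<and> (\<forall>i<nM I. \<forall>j<nN I. cmin I t \<le> cc I t i j)"
  unfolding cmin_def using M1 N1 cc_nn by (auto intro!: Min.boundedI Min_le simp: lessThan_empty_iff)

lemma hmax_ge: "i < nM I \<Longrightarrow> hc I 1 i \<le> hmax I"
  unfolding hmax_def by (rule Max_ge) auto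

lemma Z_ge: assumes F: "feasible_LP I (x,eta,y,u)" and Z: "\<forall>i<nM I. x (root I) i \<in> \<int>"
  and n: "n \<in> nodes I"
  shows "fmin I (dep I n) * Mmin I + cmin I (dep I n) * dmin I (dep I n) \<le> fdot I n (cumx I x n) + cdot I n (y n)"
proof -
  define t where "t = dep I n"
  have t: "1 \<le> t" "t \<le> nT I" using dep_range[OF n] t_def by auto
  have xnn: "\<forall>m\<in>nodes I. \<forall>i<nM I. 0 \<le> x m i" "\<forall>m\<in>nodes I. \<forall>i<nM I. \<forall>j<nN I. 0 \<le> y m i j"
    and dem: "\<forall>m\<in>nodes I. \<forall>j<nN I. (\<Sum>i<nM I. y m i j) = dem I m j"
    and bop: "\<forall>m\<in>nodes I. \<forall>i<nM I. Bop I m (y m) i \<le> cumx I x m i"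
    using F unfolding feasible_LP_def by auto
  have cr: "cumx I x (root I) i = x (root I) i" for i unfolding cumx_def path_root by simp
  have sumroot: "Mmin I \<le> (\<Sum>i<nM I. x (root I) i)"
  proof -
    have hpos: "0 < hmax I" using hmax_ge[of 0] hc_pos[of 1 0] M1 T2 by fastforce
    have sw: "(\<Sum>j<nN I. dem I (root I) j) = (\<Sum>i<nM I. \<Sum>j<nN I. y (root I) i j)"
      using dem root_in by (subst sum.swap) simp
    have "(\<Sum>j<nN I. dem I (root I) j) / hmax I = (\<Sum>i<nM I. (1 / hmax I) * (\<Sum>j<nN I. y (root I) i j))"
      unfolding sw by (simp add: sum_divide_distrib)
    also have "\<dots> \<le> (\<Sum>i<nM I. Bop I (root I) (y (root I)) i)"
    proof (rule sum_mono)
      fix i assume i: "i \<in> {..<nM I}"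
      have h: "0 < hc I 1 i" "hc I 1 i \<le> hmax I" using hc_pos[of 1 i] hmax_ge[of i] i T2 by auto
      have "1 / hmax I \<le> 1 / hc I 1 i" using h by (simp add: frac_le)
      moreover have "0 \<le> (\<Sum>j<nN I. y (root I) i j)" using xnn root_in i by (auto intro: sum_nonneg)
      ultimately show "(1 / hmax I) * (\<Sum>j<nN I. y (root I) i j) \<le> Bop I (root I) (y (root I)) i"
        unfolding Bop_def dep_root by (rule mult_right_mono)
    qed
    also have "\<dots> \<le> (\<Sum>i<nM I. x (root I) i)"
      using bop root_in cr by (intro sum_mono) auto
    finally have le: "(\<Sum>j<nN I. dem I (root I) j) / hmax I \<le> (\<Sum>i<nM I. x (root I) i)" .
    have "(\<Sum>i<nM I. x (root I) i) \<in> \<int>" using Z by (intro Ints_sum) auto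
    then obtain k where k: "(\<Sum>i<nM I. x (root I) i) = of_int k" by (auto elim: Ints_cases)
    show ?thesis unfolding Mmin_def k using le k by (simp add: ceiling_le)
  qed
  have f: "fmin I t * Mmin I \<le> fdot I n (cumx I x n)"
  proof -
    have fp: "0 \<le> fmin I t" "\<forall>i<nM I. fmin I t \<le> fc I t i" using fmin_props[OF t] by auto
    have "fmin I t * Mmin I \<le> fmin I t * (\<Sum>i<nM I. x (root I) i)"
      using sumroot fp by (simp add: mult_left_mono)
    also have "\<dots> = (\<Sum>i<nM I. fmin I t * cumx I x (root I) i)" by (simp add: cr sum_distrib_left)
    also have "\<dots> \<le> (\<Sum>i<nM I. fc I t i * cumx I x n i)"
    proof (rule sum_mono)
      fix i assume i: "i \<in> {..<nM I}"
      have c0: "0 \<le> cumx I x (root I) i" using cr xnn root_in i by auto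
      have c1: "cumx I x (root I) i \<le> cumx I x n i"
        using cumx_mono_nn[OF xnn(1) n root_in_path[OF n]] i by auto
      show "fmin I t * cumx I x (root I) i \<le> fc I t i * cumx I x n i"
        using fp i c0 c1 by (meson lessThan_iff mult_mono order_trans)
    qed
    finally show ?thesis unfolding fdot_def t_def .
  qed
  have c: "cmin I t * dmin I t \<le> cdot I n (y n)"
  proof -
    have cp: "0 \<le> cmin I t" "\<forall>i<nM I. \<forall>j<nN I. cmin I t \<le> cc I t i j" using cmin_props[OF t] by auto
    have fs: "finite (stage I t)" using fin unfolding stage_def by auto
    have "dmin I t \<le> (\<Sum>j<nN I. dem I n j)" unfolding dmin_def
      using fs n t_def by (intro Min_le) (auto simp: stage_def)
    then have "cmin I t * dmin I t \<le> cmin I t * (\<Sum>j<nN I. dem I n j)" using cp by (simp add: mult_left_mono)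
    also have "\<dots> = (\<Sum>i<nM I. \<Sum>j<nN I. cmin I t * y n i j)"
      using dem n by (subst sum.swap) (simp add: sum_distrib_left[symmetric])
    also have "\<dots> \<le> (\<Sum>i<nM I. \<Sum>j<nN I. cc I t i j * y n i j)"
      using cp xnn n by (intro sum_mono mult_right_mono) auto
    finally show ?thesis unfolding cdot_def t_def .
  qed
  show ?thesis using f c t_def by simp
qed

lemma D_le: assumes F: "feasible_LP I (x,eta,y,u)" and Z: "\<forall>i<nM I. x (root I) i \<in> \<int>"
  shows "Mmin I * (\<Sum>t=1..nT I. fmin I t) + (\<Sum>t=1..nT I. cmin I t * dmin I t) \<le> zMS I (x,eta,y,u)"
proof -
  have "Mmin I * (\<Sum>t=1..nT I. fmin I t) + (\<Sum>t=1..nT I. cmin I t * dmin I t)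
     = (\<Sum>t=1..nT I. fmin I t * Mmin I + cmin I t * dmin I t)"
    by (simp add: sum_distrib_left sum.distrib mult.commute)
  also have "\<dots> = (\<Sum>t=1..nT I. \<Sum>n\<in>stage I t. prob I n * (fmin I t * Mmin I + cmin I t * dmin I t))"
    by (intro sum.cong refl stage_const[symmetric]) auto
  also have "\<dots> = (\<Sum>t=1..nT I. \<Sum>n\<in>stage I t. prob I n * (fmin I (dep I n) * Mmin I + cmin I (dep I n) * dmin I (dep I n)))"
    by (intro sum.cong refl) (auto simp: stage_def)
  also have "\<dots> = (\<Sum>n\<in>nodes I. prob I n * (fmin I (dep I n) * Mmin I + cmin I (dep I n) * dmin I (dep I n)))"
    by (rule stage_group[symmetric])
  also have "\<dots> \<le> (\<Sum>n\<in>nodes I. prob I n * (fdot I n (cumx I x n) + cdot I n (y n)))"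
    using Z_ge[OF F Z] prob_pos by (intro sum_mono mult_left_mono) (auto intro: less_imp_le)
  also have "\<dots> \<le> zMS I (x,eta,y,u)" by (rule zMS_ge_Z[OF F])
  finally show ?thesis .
qed


lemma iter_step: assumes P: "Pinv s" and A: "alg_step I s s'" and d: "0 \<le> \<delta>"
  and C: "\<forall>n\<in>nodes I. \<forall>i<nM I. of_int \<lceil>cumx I (fst s) n i\<rceil> \<le> cumx I (fst s) n i + \<delta>"
  shows "Pinv s' \<and> (\<forall>n\<in>nodes I. \<forall>i<nM I. cumx I (fst s') n i \<in> \<int>)
     \<and> zMS I s' \<le> zMS I s + \<delta> * (\<Sum>t=1..nT I. fsum t)"
proof -
  obtain x eta y u where s: "s = (x,eta,y,u)" by (cases s) auto
  obtain x' eta' y' u' where s': "s' = (x',eta',y',u')" by (cases s') auto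
  have P': "Pinv (x,eta,y,u)" and A': "alg_step I (x,eta,y,u) (x',eta',y',u')" using P A s s' by auto
  have B: "\<forall>n\<in>nodes I. \<forall>i<nM I. cumx I x' n i \<le> cumx I x n i + \<delta>"
    using step_ceil[OF P' A'] C s by fastforce
  show ?thesis
    using step_Pinv[OF A'] step_cum[OF A'] step_cost[OF P' A' d B] G_sum s s' by auto
qed

lemma E_bounds: "0 \<le> (\<Sum>t=1..nT I. fsum t)" "(\<Sum>t=1..nT I. fsum t) \<le> real (nM I) * (\<Sum>t=1..nT I. fmax I t)"
proof -
  show "0 \<le> (\<Sum>t=1..nT I. fsum t)" unfolding fsum_def using fc_nn by (auto intro!: sum_nonneg)
  show "(\<Sum>t=1..nT I. fsum t) \<le> real (nM I) * (\<Sum>t=1..nT I. fmax I t)"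
    unfolding sum_distrib_left by (rule sum_mono) (rule fsum_le)
qed

end

theorem theorem4:
  fixes I :: "'n msinst" and eps :: real and sH sOpt :: "'n sol"
  assumes "valid_inst I"
    and "eps > 0"
    and "alg_output I eps sH"
    and "optimal_MS I sOpt"
    and "Mmin I * (\<Sum>t=1..nT I. fmin I t) + (\<Sum>t=1..nT I. cmin I t * dmin I t) > 0"
  shows "zMS I sH / zMS I sOpt \<le>
           1 + real (nM I) * (\<Sum>t=1..nT I. fmax I t) /
               (Mmin I * (\<Sum>t=1..nT I. fmin I t) + (\<Sum>t=1..nT I. cmin I t * dmin I t))"
proof -
  interpret vinst I using assms(1) by unfold_locales
  define D where "D = Mmin I * (\<Sum>t=1..nT I. fmin I t) + (\<Sum>t=1..nT I. cmin I t * dmin I t)"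
  define MF where "MF = real (nM I) * (\<Sum>t=1..nT I. fmax I t)"
  define E where "E = (\<Sum>t=1..nT I. fsum t)"
  have Dp: "0 < D" using assms(5) D_def by simp
  have E: "0 \<le> E" "E \<le> MF" using E_bounds unfolding E_def MF_def by auto
  obtain xo eo yo uo where so: "sOpt = (xo,eo,yo,uo)" by (cases sOpt) auto
  have fo: "feasible_LP I sOpt" "\<forall>i<nM I. xo (root I) i \<in> \<int>"
    using assms(4) root_in so unfolding optimal_MS_def feasible_MS_def by auto
  have DO: "D \<le> zMS I sOpt" using D_le[of xo eo yo uo] fo so D_def by simp
  obtain sLP where LP: "optimal_LP I sLP" and
    cases: "sH = sLP \<or> (\<exists>S :: nat \<Rightarrow> 'n sol. \<exists>K \<ge> 1. S 0 = sLP \<and> (\<forall>k<K. alg_step I (S k) (S (Suc k))) \<and> sH = S K)"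
    using assms(3) unfolding alg_output_def by blast
  have LPO: "zMS I sLP \<le> zMS I sOpt" using LP fo unfolding optimal_LP_def by blast
  have PLP: "Pinv sLP" using LP LP_Pinv unfolding optimal_LP_def by (cases sLP) auto
  have main: "zMS I sH \<le> zMS I sLP + E"
    using cases
  proof
    assume "sH = sLP" then show ?thesis using E by simp
  next
    assume "\<exists>S :: nat \<Rightarrow> 'n sol. \<exists>K \<ge> 1. S 0 = sLP \<and> (\<forall>k<K. alg_step I (S k) (S (Suc k))) \<and> sH = S K"
    then obtain S K where K: "K \<ge> 1" "S 0 = sLP" "\<forall>k<K. alg_step I (S k) (S (Suc k))" "sH = S K" by blast
    have inv: "Pinv (S k) \<and> (\<forall>n\<in>nodes I. \<forall>i<nM I. cumx I (fst (S k)) n i \<in> \<int>)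
       \<and> zMS I (S k) \<le> zMS I sLP + E" if "1 \<le> k" "k \<le> K" for k
      using that
    proof (induction k rule: dec_induct)
      case base
      have "Pinv (S 1) \<and> (\<forall>n\<in>nodes I. \<forall>i<nM I. cumx I (fst (S 1)) n i \<in> \<int>)
          \<and> zMS I (S 1) \<le> zMS I (S 0) + 1 * E"
        unfolding E_def using K PLP
        by (intro iter_step) (auto simp: of_int_ceiling_le_add_one)
      then show ?case using K by simp
    next
      case (step k)
      have st: "alg_step I (S k) (S (Suc k))" using K step by auto
      have IH: "Pinv (S k)" "\<forall>n\<in>nodes I. \<forall>i<nM I. cumx I (fst (S k)) n i \<in> \<int>"
        "zMS I (S k) \<le> zMS I sLP + E" using step by auto
      have C: "\<forall>n\<in>nodes I. \<forall>i<nM I. of_int \<lceil>cumx I (fst (S k)) n i\<rceil> \<le> cumx I (fst (S k)) n i + 0"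
        using IH(2) by (auto elim!: Ints_cases)
      have "Pinv (S (Suc k)) \<and> (\<forall>n\<in>nodes I. \<forall>i<nM I. cumx I (fst (S (Suc k))) n i \<in> \<int>)
          \<and> zMS I (S (Suc k)) \<le> zMS I (S k) + 0 * E"
        unfolding E_def by (rule iter_step[OF IH(1) st _ C]) simp
      then show ?case using IH(3) by simp
    qed
    show ?thesis using inv[of K] K by simp
  qed
  have H: "zMS I sH \<le> zMS I sOpt + MF" using main LPO E by simp
  have zp: "0 < zMS I sOpt" using Dp DO by simp
  have MF0: "0 \<le> MF" using E by simp
  have "zMS I sH / zMS I sOpt \<le> (zMS I sOpt + MF) / zMS I sOpt"
    using H zp by (simp add: divide_right_mono)
  also have "\<dots> = 1 + MF / zMS I sOpt" using zp by (simp add: add_divide_distrib)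
  also have "\<dots> \<le> 1 + MF / D" using MF0 Dp DO by (simp add: frac_le)
  finally show ?thesis unfolding MF_def D_def .
qed

end
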